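(* Let $N=\{1,\dots,n\}$ and let $F:2^N\to\mathbb{R}$ be quasi-submodular. Run the minimization procedure (described in the context) once from $X_0=\emptyset$ and let $Q_+$ be its output, and once from $X_0=N$ and let $S_+$ be its output. Then every global minimizer of $F$ lies in the set interval lattice $[Q_+,S_+]$, i.e., for every $X_*\in\arg\min_{X\subseteq N}F(X)$ we have $Q_+\subseteq X_*\subseteq S_+$.
   Context: For $A\subseteq N$ and $i\in N$, write $A+i=A\cup\{i\}$, $A-i=A\setminus\{i\}$, and $F(i\mid A)=F(A+i)-F(A)$. A set function $F:2^N\to\mathbb{R}$ is quasi-submodular if for all $X,Y\subseteq N$ both hold: $F(X\cap Y)\ge F(X)\Rightarrow F(Y)\ge F(X\cup Y)$, and $F(X\cap Y)>F(X)\Rightarrow F(Y)>F(X\cup Y)$. For sets $A,B$, the set interval lattice is $[A,B]=\{U: A\subseteq U\subseteq B\}$. Minimization procedure: given $X_0\subseteq N$, for $t=0,1,2,\dots$: let $U_t=\{u\in N\setminus X_t: F(u\mid X_t)<0\}$ and $Y_t=X_t\cup U_t$; let $D_t=\{d\in X_t: F(d\mid Y_t-d)>0\}$ and $X_{t+1}=Y_t\setminus D_t$; if $X_{t+1}=X_t$, stop and output $X_t$; otherwise continue with $t+1$. *)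

theory Defs
  imports Main "HOL.Real"
begin

definition marg :: "('a set \<Rightarrow> real) \<Rightarrow> 'a \<Rightarrow> 'a set \<Rightarrow> real" where
  "marg F i A = F (insert i A) - F A"

definition quasi_submodular :: "'a set \<Rightarrow> ('a set \<Rightarrow> real) \<Rightarrow> bool" where
  "quasi_submodular N F \<longleftrightarrow>
     (\<forall>X Y. X \<subseteq> N \<longrightarrow> Y \<subseteq> N \<longrightarrow>
        (F (X \<inter> Y) \<ge> F X \<longrightarrow> F Y \<ge> F (X \<union> Y)) \<and>
        (F (X \<inter> Y) > F X \<longrightarrow> F Y > F (X \<union> Y)))"

definition min_step :: "'a set \<Rightarrow> ('a set \<Rightarrow> real) \<Rightarrow> 'a set \<Rightarrow> 'a set" where
  "min_step N F X =
     (let U = {u \<in> N - X. marg F u X < 0};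
          Y = X \<union> U;
          D = {d \<in> X. marg F d (Y - {d}) > 0}
      in Y - D)"

(* Q is the output of the procedure started at X0: the iterate X_t at which the
   procedure stops (X_{t+1} = X_t); once stopped the iterates are constant,
   so this output is unique when it exists *)
definition min_output :: "'a set \<Rightarrow> ('a set \<Rightarrow> real) \<Rightarrow> 'a set \<Rightarrow> 'a set \<Rightarrow> bool" where
  "min_output N F X0 Q \<longleftrightarrow>
     (\<exists>t. Q = (min_step N F ^^ t) X0 \<and> min_step N F Q = Q)"

end

theory Submission
  imports Defs
begin

lemma step_lower:
  assumes qs: "quasi_submodular N F" and XsN: "Xs \<subseteq> N"
    and mn: "\<forall>X. X \<subseteq> N \<longrightarrow> F Xs \<le> F X"
    and sub: "X \<subseteq> Xs"
  shows "min_step N F X \<subseteq> Xs"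
proof -
  have "\<forall>u. u \<in> N - X \<and> marg F u X < 0 \<longrightarrow> u \<in> Xs"
  proof (intro allI impI, rule ccontr)
    fix u assume u: "u \<in> N - X \<and> marg F u X < 0" and nu: "u \<notin> Xs"
    have i: "insert u X \<inter> Xs = X" using sub nu by blast
    have un: "insert u X \<union> Xs = insert u Xs" using sub by blast
    have "insert u X \<subseteq> N" using u sub XsN by blast
    then have "F (insert u X \<inter> Xs) > F (insert u X) \<longrightarrow> F Xs > F (insert u X \<union> Xs)"
      using qs XsN unfolding quasi_submodular_def by (meson order.refl)
    moreover have "F X > F (insert u X)" using u unfolding marg_def by simp
    ultimately have "F Xs > F (insert u Xs)" using i un by simp
    moreover have "insert u Xs \<subseteq> N" using u XsN by blast
    ultimately have "F Xs > F (insert u Xs)" "F Xs \<le> F (insert u Xs)" using mn by auto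
    then show False by linarith
  qed
  then have "X \<union> {u \<in> N - X. marg F u X < 0} \<subseteq> Xs" using sub by blast
  then show ?thesis unfolding min_step_def Let_def by (rule subset_trans[OF Diff_subset])
qed

lemma step_upper:
  assumes qs: "quasi_submodular N F" and XsN: "Xs \<subseteq> N"
    and mn: "\<forall>X. X \<subseteq> N \<longrightarrow> F Xs \<le> F X"
    and sub: "Xs \<subseteq> X" and XN: "X \<subseteq> N"
  shows "Xs \<subseteq> min_step N F X \<and> min_step N F X \<subseteq> N"
proof -
  define Y where "Y = X \<union> {u \<in> N - X. marg F u X < 0}"
  have YN: "Y \<subseteq> N" using XN unfolding Y_def by blast
  have XY: "Xs \<subseteq> Y" using sub unfolding Y_def by blast
  have "\<forall>d \<in> Xs. \<not> marg F d (Y - {d}) > 0"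
  proof (intro ballI notI)
    fix d assume d: "d \<in> Xs" and pos: "marg F d (Y - {d}) > 0"
    have i: "Xs \<inter> (Y - {d}) = Xs - {d}" using XY by blast
    have un: "Xs \<union> (Y - {d}) = Y" using XY d by blast
    have "Y - {d} \<subseteq> N" using YN by blast
    then have "F (Xs \<inter> (Y - {d})) \<ge> F Xs \<longrightarrow> F (Y - {d}) \<ge> F (Xs \<union> (Y - {d}))"
      using qs XsN unfolding quasi_submodular_def by (meson order.refl)
    moreover have "F (Xs - {d}) \<ge> F Xs" using mn XsN by blast
    ultimately have "F (Y - {d}) \<ge> F Y" using i un by simp
    moreover have "insert d (Y - {d}) = Y" using XY d by blast
    ultimately show False using pos unfolding marg_def by simp
  qed
  then have "Xs \<subseteq> Y - {d \<in> X. marg F d (Y - {d}) > 0}" using XY by blast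
  moreover have "Y - {d \<in> X. marg F d (Y - {d}) > 0} \<subseteq> N" using YN by blast
  moreover have "min_step N F X = Y - {d \<in> X. marg F d (Y - {d}) > 0}"
    unfolding min_step_def Let_def Y_def by simp
  ultimately show ?thesis by simp
qed

theorem theorem1:
  fixes n :: nat and F :: "nat set \<Rightarrow> real" and Qp Sp Xs :: "nat set"
  assumes "quasi_submodular {1..n} F"
    and "min_output {1..n} F {} Qp"
    and "min_output {1..n} F {1..n} Sp"
    and "Xs \<subseteq> {1..n}"
    and "\<forall>X. X \<subseteq> {1..n} \<longrightarrow> F Xs \<le> F X"
  shows "Qp \<subseteq> Xs \<and> Xs \<subseteq> Sp"
proof -
  have L: "(min_step {1..n} F ^^ t) {} \<subseteq> Xs" for t
  proof (induction t)
    case 0 then show ?case by simp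
  next
    case (Suc t) then show ?case using step_lower[OF assms(1,4,5)] by simp
  qed
  have U: "Xs \<subseteq> (min_step {1..n} F ^^ t) {1..n} \<and> (min_step {1..n} F ^^ t) {1..n} \<subseteq> {1..n}" for t
  proof (induction t)
    case 0 then show ?case using assms(4) by simp
  next
    case (Suc t) then show ?case using step_upper[OF assms(1,4,5)] by simp
  qed
  show ?thesis using L U assms(2,3) unfolding min_output_def by blast
qed

end
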